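(* Let $G$ and $H$ be abelian groups with tiles $T \subset G$ and $A \subset B \subset H$, and let $k,\ell,d,u,v \ge 0$ be integers. Suppose that $G^k\times H^\ell\times B^d$ is $(T^{\times k}, A^{\times(\ell+d)})$-tilable and that $G^u\times H^v$ is $(T^{\times u}, B^{\times v})$-tilable. Then $G^{du+k}\times H^{dv+\ell}$ is $(T^{\times(du+k)}, A^{\times(dv+\ell)})$-tilable.
   Context: A tile in an abelian group is a non-empty subset. Given abelian groups $K_1,\dots,K_r$ and tiles $V_j\subset K_j$, let $\mathsf{V}_j \subset K_1\times\dots\times K_r$ be the set of points whose $j$-th coordinate lies in $V_j$ and whose other coordinates are $0$. A copy of $V_j$ is a translate $\mathsf{V}_j + x$ with $x \in K_1\times\dots\times K_r$. A subset of $K_1\times\dots\times K_r$ is $(V_1,\dots,V_r)$-tilable if it is a disjoint union of copies of $V_1,\dots,V_r$. The notation $V^{\times e}$ in such a list stands for $e$ consecutive entries $V,\dots,V$; e.g. $(T^{\times k},A^{\times(\ell+d)})$-tilable for a subset of $G^k\times H^\ell\times B^d\subset G^k\times H^{\ell+d}$ means the first $k$ factors carry the tile $T$ and the remaining $\ell+d$ factors carry the tile $A$. *)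

theory Defs
  imports Main
begin

text \<open>Points of G^m x H^n are pairs (x, y) of functions x :: nat => 'g, y :: nat => 'h,
  where coordinates i < m of x are the G-factors, coordinates j < n of y are the H-factors,
  and all other coordinates are 0.\<close>

definition space :: "nat \<Rightarrow> nat \<Rightarrow> ((nat \<Rightarrow> 'g::zero) \<times> (nat \<Rightarrow> 'h::zero)) set" where
  "space m n = {(x, y). (\<forall>i\<ge>m. x i = 0) \<and> (\<forall>j\<ge>n. y j = 0)}"

definition tileG :: "nat \<Rightarrow> 'g::zero set \<Rightarrow> ((nat \<Rightarrow> 'g) \<times> (nat \<Rightarrow> 'h::zero)) set" where
  "tileG i V = {(x, y). x i \<in> V \<and> (\<forall>i'. i' \<noteq> i \<longrightarrow> x i' = 0) \<and> (\<forall>j. y j = 0)}"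

definition tileH :: "nat \<Rightarrow> 'h::zero set \<Rightarrow> ((nat \<Rightarrow> 'g::zero) \<times> (nat \<Rightarrow> 'h)) set" where
  "tileH j V = {(x, y). y j \<in> V \<and> (\<forall>i. x i = 0) \<and> (\<forall>j'. j' \<noteq> j \<longrightarrow> y j' = 0)}"

definition translate ::
  "((nat \<Rightarrow> 'g::plus) \<times> (nat \<Rightarrow> 'h::plus)) \<Rightarrow> ((nat \<Rightarrow> 'g) \<times> (nat \<Rightarrow> 'h)) set
     \<Rightarrow> ((nat \<Rightarrow> 'g) \<times> (nat \<Rightarrow> 'h)) set" where
  "translate t S = (\<lambda>(x, y). (\<lambda>i. x i + fst t i, \<lambda>j. y j + snd t j)) ` S"

definition copies :: "nat \<Rightarrow> nat \<Rightarrow> 'g::ab_group_add set \<Rightarrow> 'h::ab_group_add set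
     \<Rightarrow> ((nat \<Rightarrow> 'g) \<times> (nat \<Rightarrow> 'h)) set set" where
  "copies m n T A =
     {translate t (tileG i T) | i t. i < m \<and> t \<in> space m n} \<union>
     {translate t (tileH j A) | j t. j < n \<and> t \<in> space m n}"

definition tilable :: "nat \<Rightarrow> nat \<Rightarrow> 'g::ab_group_add set \<Rightarrow> 'h::ab_group_add set
     \<Rightarrow> ((nat \<Rightarrow> 'g) \<times> (nat \<Rightarrow> 'h)) set \<Rightarrow> bool" where
  "tilable m n T A S \<longleftrightarrow>
     (\<exists>C. C \<subseteq> copies m n T A \<and> pairwise disjnt C \<and> \<Union>C = S)"

end

theory Submission
  imports Defs
begin


definition padd :: "((nat \<Rightarrow> 'g::ab_group_add) \<times> (nat \<Rightarrow> 'h::ab_group_add)) \<Rightarrow> _ \<Rightarrow> _" where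
  "padd p t = (\<lambda>i. fst p i + fst t i, \<lambda>j. snd p j + snd t j)"
definition psub :: "((nat \<Rightarrow> 'g::ab_group_add) \<times> (nat \<Rightarrow> 'h::ab_group_add)) \<Rightarrow> _ \<Rightarrow> _" where
  "psub p t = (\<lambda>i. fst p i - fst t i, \<lambda>j. snd p j - snd t j)"

lemma translate_eq: "translate t S = (\<lambda>p. padd p t) ` S"
  unfolding translate_def padd_def by (auto simp: case_prod_beta image_iff)

lemma mem_translate: "q \<in> translate t S \<longleftrightarrow> psub q t \<in> S"
proof
  assume "q \<in> translate t S"
  then obtain p where "p \<in> S" "q = padd p t" by (auto simp: translate_eq)
  moreover have "psub (padd p t) t = p" by (simp add: psub_def padd_def)
  ultimately show "psub q t \<in> S" by simp
next
  assume "psub q t \<in> S"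
  moreover have "q = padd (psub q t) t" by (simp add: psub_def padd_def)
  ultimately show "q \<in> translate t S" unfolding translate_eq by blast
qed

lemma mem_tileG: "q \<in> tileG c T \<longleftrightarrow> fst q c \<in> T \<and> (\<forall>i. i \<noteq> c \<longrightarrow> fst q i = 0) \<and> (\<forall>j. snd q j = 0)"
  by (cases q) (simp add: tileG_def)
lemma mem_tileH: "q \<in> tileH c T \<longleftrightarrow> snd q c \<in> T \<and> (\<forall>i. fst q i = 0) \<and> (\<forall>j. j \<noteq> c \<longrightarrow> snd q j = 0)"
  by (cases q) (simp add: tileH_def)

lemma mem_trG: fixes q :: "(nat \<Rightarrow> 'g::ab_group_add) \<times> (nat \<Rightarrow> 'h::ab_group_add)" shows "q \<in> translate t (tileG c T) \<longleftrightarrow>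
   fst q c - fst t c \<in> T \<and> (\<forall>i. i \<noteq> c \<longrightarrow> fst q i = fst t i) \<and> (\<forall>j. snd q j = snd t j)"
  by (simp add: mem_translate mem_tileG psub_def)
lemma mem_trH: fixes q :: "(nat \<Rightarrow> 'g::ab_group_add) \<times> (nat \<Rightarrow> 'h::ab_group_add)" shows "q \<in> translate t (tileH c T) \<longleftrightarrow>
   snd q c - snd t c \<in> T \<and> (\<forall>i. fst q i = fst t i) \<and> (\<forall>j. j \<noteq> c \<longrightarrow> snd q j = snd t j)"
  by (simp add: mem_translate mem_tileH psub_def)

lemma mem_space: "q \<in> space m n \<longleftrightarrow> (\<forall>i\<ge>m. fst q i = 0) \<and> (\<forall>j\<ge>n. snd q j = 0)"
  by (cases q) (simp add: space_def)

lemma copyG: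
  assumes "c < m" "T \<noteq> {}" "translate t (tileG c T) \<subseteq> space m n"
  shows "translate t (tileG c T) \<in> copies m n T A"
proof -
  obtain g where g: "g \<in> T" using assms(2) by auto
  let ?q = "(\<lambda>i. if i = c then g + fst t c else fst t i, snd t)"
  have "?q \<in> translate t (tileG c T)" using g by (simp add: mem_trG)
  hence "?q \<in> space m n" using assms(3) by blast
  hence h: "(\<forall>i\<ge>m. fst ?q i = 0) \<and> (\<forall>j\<ge>n. snd ?q j = 0)" unfolding mem_space .
  have "t \<in> space m n" unfolding mem_space
  proof (intro conjI allI impI)
    fix i assume i: "m \<le> i" then show "fst t i = 0" using h assms(1) by (auto dest!: spec[of _ i])
  next
    fix i assume i: "n \<le> i" then show "snd t i = 0" using h assms(1) by (auto dest!: spec[of _ i])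
  qed
  thus ?thesis using assms(1) unfolding copies_def by blast
qed

lemma copyH:
  assumes "c < n" "A \<noteq> {}" "translate t (tileH c A) \<subseteq> space m n"
  shows "translate t (tileH c A) \<in> copies m n T A"
proof -
  obtain g where g: "g \<in> A" using assms(2) by auto
  let ?q = "(fst t, \<lambda>i. if i = c then g + snd t c else snd t i)"
  have "?q \<in> translate t (tileH c A)" using g by (simp add: mem_trH)
  hence "?q \<in> space m n" using assms(3) by blast
  hence h: "(\<forall>i\<ge>m. fst ?q i = 0) \<and> (\<forall>j\<ge>n. snd ?q j = 0)" unfolding mem_space .
  have "t \<in> space m n" unfolding mem_space
  proof (intro conjI allI impI)
    fix i assume i: "m \<le> i" then show "fst t i = 0" using h assms(1) by (auto dest!: spec[of _ i])
  next
    fix i assume i: "n \<le> i" then show "snd t i = 0" using h assms(1) by (auto dest!: spec[of _ i])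
  qed
  thus ?thesis using assms(1) unfolding copies_def by blast
qed

lemma tilable_by_fun:
  assumes "\<And>z. z \<in> S \<Longrightarrow> z \<in> f z \<and> f z \<subseteq> S \<and> f z \<in> copies m n T A \<and> (\<forall>w\<in>f z. f w = f z)"
  shows "tilable m n T A S"
  unfolding tilable_def
proof (intro exI conjI)
  show "f ` S \<subseteq> copies m n T A" using assms by blast
  show "\<Union> (f ` S) = S" using assms by blast
  show "pairwise disjnt (f ` S)"
  proof (rule pairwiseI)
    fix P Q assume "P \<in> f ` S" "Q \<in> f ` S" "P \<noteq> Q"
    then obtain z z' where z: "z \<in> S" "z' \<in> S" "P = f z" "Q = f z'" by blast
    show "disjnt P Q" unfolding disjnt_def
    proof (rule ccontr)
      assume "P \<inter> Q \<noteq> {}"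
      then obtain w where "w \<in> f z" "w \<in> f z'" using z by blast
      hence "f w = f z" "f w = f z'" using assms z by blast+
      thus False using \<open>P \<noteq> Q\<close> z by simp
    qed
  qed
qed

definition ptile :: "'a set set \<Rightarrow> 'a \<Rightarrow> 'a set" where
  "ptile C p = (THE Q. Q \<in> C \<and> p \<in> Q)"

lemma ptile_eq: assumes "pairwise disjnt C" "p \<in> Q" "Q \<in> C" shows "ptile C p = Q"
  unfolding ptile_def
proof (rule the_equality)
  show "Q \<in> C \<and> p \<in> Q" using assms by simp
  fix Q' assume "Q' \<in> C \<and> p \<in> Q'"
  thus "Q' = Q" using assms unfolding pairwise_def disjnt_def by blast
qed

lemma ptile_in: assumes "pairwise disjnt C" "p \<in> \<Union>C" shows "ptile C p \<in> C \<and> p \<in> ptile C p"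
  using assms ptile_eq by (metis UnionE)



definition X1 :: "nat \<Rightarrow> nat \<Rightarrow> nat \<Rightarrow> 'h::ab_group_add set \<Rightarrow> ((nat \<Rightarrow> 'g::ab_group_add) \<times> (nat \<Rightarrow> 'h)) set" where
  "X1 k l d B = {(x, y) \<in> space k (l + d). \<forall>j. l \<le> j \<and> j < l + d \<longrightarrow> y j \<in> B}"

lemma mem_X1: "q \<in> X1 k l d B \<longleftrightarrow> q \<in> space k (l+d) \<and> (\<forall>j. l \<le> j \<and> j < l + d \<longrightarrow> snd q j \<in> B)"
  by (cases q) (simp add: X1_def)

lemma div_block: "(b::nat) < v \<Longrightarrow> (i * v + b) div v = i"
  by simp

lemma block_inj: "(a::nat) < u \<Longrightarrow> a' < u \<Longrightarrow> i * u + a' = i0 * u + a \<Longrightarrow> i = i0 \<and> a' = a"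
  by (metis div_block mod_mult_self3 mod_less)

locale tsetup =
  fixes T :: "'g::ab_group_add set" and A B :: "'h::ab_group_add set"
    and k l d u v :: nat
    and C0 C1 :: "((nat \<Rightarrow> 'g) \<times> (nat \<Rightarrow> 'h)) set set"
  assumes T: "T \<noteq> {}" and A: "A \<noteq> {}" and AB: "A \<subseteq> B"
    and C0: "C0 \<subseteq> copies u v T B" "pairwise disjnt C0" "\<Union>C0 = space u v"
    and C1: "C1 \<subseteq> copies k (l+d) T A" "pairwise disjnt C1" "\<Union>C1 = X1 k l d B"
begin

abbreviation "S \<equiv> space (d * u + k) (d * v + l) :: ((nat \<Rightarrow> 'g) \<times> (nat \<Rightarrow> 'h)) set"

definition proj :: "nat \<Rightarrow> (nat \<Rightarrow> 'g) \<times> (nat \<Rightarrow> 'h) \<Rightarrow> (nat \<Rightarrow> 'g) \<times> (nat \<Rightarrow> 'h)" where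
  "proj i z = (\<lambda>a. if a < u then fst z (k + i*u + a) else 0, \<lambda>b. if b < v then snd z (l + i*v + b) else 0)"

definition TV where "TV z = (\<lambda>i. ptile C0 (proj i z))"

definition isT where "isT P \<longleftrightarrow> (\<exists>a s. a < u \<and> P = translate s (tileG a T))"

lemma proj_space: "proj i z \<in> space u v"
  by (simp add: proj_def mem_space)

lemma TV_in: "TV z i \<in> C0 \<and> proj i z \<in> TV z i"
  unfolding TV_def using ptile_in[OF C0(2)] C0(3) proj_space by blast

lemma TV_eq: "proj i w \<in> TV z i \<Longrightarrow> TV w i = TV z i"
  unfolding TV_def using ptile_eq[OF C0(2)] TV_in[of z i] unfolding TV_def by blast

lemma proj_out: "z \<in> S \<Longrightarrow> d \<le> i \<Longrightarrow> proj i z = (\<lambda>_. 0, \<lambda>_. 0)"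
proof -
  assume z: "z \<in> S" and i: "d \<le> i"
  have "d * u \<le> i * u" "d * v \<le> i * v" using i by simp_all
  moreover have zs: "\<forall>c\<ge>d*u+k. fst z c = 0" "\<forall>c\<ge>d*v+l. snd z c = 0" using z by (simp_all add: mem_space)
  ultimately have "fst z (k + i*u + a) = 0" "snd z (l + i*v + b) = 0" for a b
  proof -
    have "d*u+k \<le> k + i*u + a" "d*v+l \<le> l + i*v + b" using \<open>d * u \<le> i * u\<close> \<open>d * v \<le> i * v\<close> by linarith+
    thus "fst z (k + i*u + a) = 0" "snd z (l + i*v + b) = 0" using zs by blast+
  qed
  thus ?thesis unfolding proj_def by (auto intro!: ext)
qed

lemma C0_cases: "P \<in> C0 \<Longrightarrow> isT P \<or> (\<exists>b s. b < v \<and> P = translate s (tileH b B))"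
  using C0(1) unfolding copies_def isT_def by blast

definition i0 where "i0 P = (LEAST i. i < d \<and> isT (P i))"
definition as where "as P = (SOME as. fst as < u \<and> P (i0 P) = translate (snd as) (tileG (fst as) T))"
definition cpos where "cpos P = k + i0 P * u + fst (as P)"
definition tile1 where
  "tile1 P z = translate (\<lambda>c. if c = cpos P then fst (snd (as P)) (fst (as P)) else fst z c, snd z) (tileG (cpos P) T)"

lemma case1_spec:
  assumes "\<exists>i<d. isT (P i)"
  shows "i0 P < d" "fst (as P) < u" "P (i0 P) = translate (snd (as P)) (tileG (fst (as P)) T)"
proof -
  have "i0 P < d \<and> isT (P (i0 P))" unfolding i0_def using assms by (rule LeastI_ex)
  thus "i0 P < d" by simp
  have "\<exists>as. fst as < u \<and> P (i0 P) = translate (snd as) (tileG (fst as) T)"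
    using \<open>i0 P < d \<and> isT (P (i0 P))\<close> unfolding isT_def by auto
  hence "fst (as P) < u \<and> P (i0 P) = translate (snd (as P)) (tileG (fst (as P)) T)"
    unfolding as_def by (rule someI_ex)
  thus "fst (as P) < u" "P (i0 P) = translate (snd (as P)) (tileG (fst (as P)) T)" by simp_all
qed

lemma case1:
  assumes z: "z \<in> S" and ex: "\<exists>i<d. isT (TV z i)"
  shows "z \<in> tile1 (TV z) z" "tile1 (TV z) z \<subseteq> S" "tile1 (TV z) z \<in> copies (d * u + k) (d * v + l) T A"
    "\<And>w. w \<in> tile1 (TV z) z \<Longrightarrow> TV w = TV z \<and> tile1 (TV w) w = tile1 (TV z) z"
proof -
  define P where "P = TV z"
  note sp = case1_spec[OF ex[folded P_def]]
  define a where "a = fst (as P)"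
  define s where "s = snd (as P)"
  define j where "j = i0 P"
  have a: "a < u" and j: "j < d" and Pj: "P j = translate s (tileG a T)"
    using sp unfolding a_def s_def j_def by auto
  have cp: "cpos P = k + j * u + a" unfolding cpos_def a_def j_def ..
  have pz: "proj j z \<in> translate s (tileG a T)" using TV_in[of z j] Pj P_def by simp
  hence pz': "fst z (k + j*u + a) - fst s a \<in> T" "\<And>a'. a' \<noteq> a \<Longrightarrow> fst (proj j z) a' = fst s a'"
      "\<And>b. snd (proj j z) b = snd s b"
    using a by (auto simp: mem_trG proj_def)
  have t1: "w \<in> tile1 P z \<longleftrightarrow> fst w (k + j*u + a) - fst s a \<in> T \<and>
      (\<forall>c. c \<noteq> k + j*u + a \<longrightarrow> fst w c = fst z c) \<and> (\<forall>c. snd w c = snd z c)" for w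
    unfolding tile1_def mem_trG cp by (auto simp: a_def s_def)
  show "z \<in> tile1 (TV z) z" using t1 pz' P_def by simp
  have jl: "j * u + a < d * u"
  proof -
    have "j * u + a < (j+1) * u" using a by simp
    also have "\<dots> \<le> d * u" using j by (intro mult_right_mono) auto
    finally show ?thesis .
  qed
  show sub: "tile1 (TV z) z \<subseteq> S"
  proof
    fix w assume "w \<in> tile1 (TV z) z"
    hence w: "fst w (k + j*u + a) - fst s a \<in> T" "\<And>c. c \<noteq> k + j*u + a \<Longrightarrow> fst w c = fst z c"
        "\<And>c. snd w c = snd z c" using t1 P_def by auto
    show "w \<in> S" unfolding mem_space
    proof (intro conjI allI impI)
      fix c assume "d * u + k \<le> c"
      hence "c \<noteq> k + j*u + a" using jl by auto
      thus "fst w c = 0" using w(2) z \<open>d * u + k \<le> c\<close> by (auto simp: mem_space)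
    next
      fix c assume "d * v + l \<le> c"
      thus "snd w c = 0" using w(3) z by (auto simp: mem_space)
    qed
  qed
  show "tile1 (TV z) z \<in> copies (d * u + k) (d * v + l) T A"
    using sub unfolding tile1_def by (intro copyG T) (use jl cp P_def in auto)
  fix w assume wt: "w \<in> tile1 (TV z) z"
  hence w: "fst w (k + j*u + a) - fst s a \<in> T" "\<And>c. c \<noteq> k + j*u + a \<Longrightarrow> fst w c = fst z c"
      "\<And>c. snd w c = snd z c" using t1 P_def by auto
  have "TV w i = TV z i" for i
  proof (cases "i = j")
    case True
    have "proj j w \<in> translate s (tileG a T)"
      unfolding mem_trG
    proof (intro conjI allI impI)
      show "fst (proj j w) a - fst s a \<in> T" using w(1) a by (simp add: proj_def)
      fix a' assume "a' \<noteq> a"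
      hence "fst (proj j w) a' = fst (proj j z) a'"
        using w(2) a block_inj[of a u a' j j] by (auto simp: proj_def)
      thus "fst (proj j w) a' = fst s a'" using pz' \<open>a' \<noteq> a\<close> by simp
    next
      fix b show "snd (proj j w) b = snd s b" using pz'(3)[of b] w(3) by (cases "b < v") (simp_all add: proj_def)
    qed
    hence "TV w j = TV z j" using Pj P_def by (intro TV_eq) simp
    thus ?thesis using True by simp
  next
    case False
    have "fst w (k + i * u + a') = fst z (k + i * u + a')" if "a' < u" for a'
    proof -
      have "k + i * u + a' \<noteq> k + j * u + a" using block_inj[of a u a' i j] a that False by auto
      thus ?thesis using w(2) by blast
    qed
    hence "proj i w = proj i z"
      using w(3) unfolding proj_def by (auto intro!: ext)
    thus ?thesis unfolding TV_def by simp
  qed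
  hence TVw: "TV w = TV z" by (simp add: ext)
  moreover have "tile1 (TV w) w = tile1 (TV z) z"
    unfolding tile1_def TVw using w(2,3) cp P_def by (auto intro!: arg_cong2[where f=translate] ext simp: prod_eq_iff)
  ultimately show "TV w = TV z \<and> tile1 (TV w) w = tile1 (TV z) z" by simp
qed

end


context tsetup begin

definition bs :: "(nat \<Rightarrow> ((nat \<Rightarrow> 'g) \<times> (nat \<Rightarrow> 'h)) set) \<Rightarrow> nat \<Rightarrow> nat \<times> (nat \<Rightarrow> 'g) \<times> (nat \<Rightarrow> 'h)" where "bs P i = (SOME bs. fst bs < v \<and> P i = translate (snd bs) (tileH (fst bs) B))"
definition bet where "bet P i = fst (bs P i)"
definition off where "off P i = snd (snd (bs P i)) (bet P i)"
definition hpos where "hpos P i = l + i * v + bet P i"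
definition hinv where "hinv c = (c - l) div v"
definition hcond where "hcond P c \<longleftrightarrow> l \<le> c \<and> c < l + d * v \<and> c = hpos P (hinv c)"
definition E :: "(nat \<Rightarrow> ((nat \<Rightarrow> 'g) \<times> (nat \<Rightarrow> 'h)) set) \<Rightarrow> ((nat \<Rightarrow> 'g) \<times> (nat \<Rightarrow> 'h)) \<Rightarrow> ((nat \<Rightarrow> 'g) \<times> (nat \<Rightarrow> 'h))" where "E P p = (\<lambda>c. if c < k then fst p c else 0,
   \<lambda>c. if c < l then snd p c else if hcond P c then snd p (l + hinv c) else 0)"
definition base :: "(nat \<Rightarrow> ((nat \<Rightarrow> 'g) \<times> (nat \<Rightarrow> 'h)) set) \<Rightarrow> ((nat \<Rightarrow> 'g) \<times> (nat \<Rightarrow> 'h)) \<Rightarrow> ((nat \<Rightarrow> 'g) \<times> (nat \<Rightarrow> 'h))" where "base P z = (\<lambda>c. if c < k then 0 else fst z c,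
   \<lambda>c. if c < l then 0 else if hcond P c then off P (hinv c) else snd z c)"
definition phi :: "(nat \<Rightarrow> ((nat \<Rightarrow> 'g) \<times> (nat \<Rightarrow> 'h)) set) \<Rightarrow> ((nat \<Rightarrow> 'g) \<times> (nat \<Rightarrow> 'h)) \<Rightarrow> ((nat \<Rightarrow> 'g) \<times> (nat \<Rightarrow> 'h)) \<Rightarrow> ((nat \<Rightarrow> 'g) \<times> (nat \<Rightarrow> 'h))" where "phi P z p = padd (E P p) (base P z)"
definition psi :: "(nat \<Rightarrow> ((nat \<Rightarrow> 'g) \<times> (nat \<Rightarrow> 'h)) set) \<Rightarrow> ((nat \<Rightarrow> 'g) \<times> (nat \<Rightarrow> 'h)) \<Rightarrow> ((nat \<Rightarrow> 'g) \<times> (nat \<Rightarrow> 'h))" where "psi P w = (\<lambda>c. if c < k then fst w c else 0,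
   \<lambda>c. if c < l then snd w c else if c < l + d then snd w (hpos P (c - l)) - off P (c - l) else 0)"
definition tile2 where "tile2 P z = phi P z ` ptile C1 (psi P z)"

definition AllB where "AllB P \<longleftrightarrow> (\<forall>i<d. P i \<in> C0 \<and> \<not> isT (P i))"

lemma bs_spec: assumes "AllB P" "i < d"
  shows "bet P i < v" "P i = translate (snd (bs P i)) (tileH (bet P i) B)"
proof -
  have "\<exists>bs. fst bs < v \<and> P i = translate (snd bs) (tileH (fst bs) B)"
    using assms C0_cases unfolding AllB_def by fastforce
  hence "fst (bs P i) < v \<and> P i = translate (snd (bs P i)) (tileH (fst (bs P i)) B)"
    unfolding bs_def by (rule someI_ex)
  thus "bet P i < v" "P i = translate (snd (bs P i)) (tileH (bet P i) B)" unfolding bet_def by simp_all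
qed

lemma hinv_block: "b < v \<Longrightarrow> hinv (l + i * v + b) = i"
  unfolding hinv_def by simp

lemma hpos_facts: assumes "AllB P" "i < d"
  shows "hinv (hpos P i) = i" "hcond P (hpos P i)" "hpos P i < l + d * v" "l \<le> hpos P i"
proof -
  have b: "bet P i < v" using bs_spec[OF assms] by simp
  show h: "hinv (hpos P i) = i" unfolding hpos_def using hinv_block[OF b] .
  have "i * v + bet P i < (i + 1) * v" using b by simp
  also have "\<dots> \<le> d * v" using assms(2) by (intro mult_right_mono) auto
  finally show "hpos P i < l + d * v" unfolding hpos_def by simp
  thus "hcond P (hpos P i)" unfolding hcond_def h by (simp add: hpos_def)
  show "l \<le> hpos P i" unfolding hpos_def by simp
qed

lemma hcond_lt: assumes "hcond P c" shows "hinv c < d" "l \<le> c"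
proof -
  have c: "l \<le> c" "c - l < d * v" using assms unfolding hcond_def by auto
  hence "v > 0" by (cases v) auto
  show "hinv c < d" unfolding hinv_def using c(2) \<open>v > 0\<close>
    by (simp add: less_mult_imp_div_less)
  show "l \<le> c" using c by simp
qed

lemma hcond_block: assumes "AllB P" "b < v"
  shows "hcond P (l + i * v + b) \<longleftrightarrow> i < d \<and> b = bet P i"
proof
  assume h: "hcond P (l + i * v + b)"
  have "i < d" using hcond_lt(1)[OF h] hinv_block[OF assms(2)] by simp
  moreover have "b = bet P i" using h hinv_block[OF assms(2)] unfolding hcond_def hpos_def by simp
  ultimately show "i < d \<and> b = bet P i" by simp
next
  assume "i < d \<and> b = bet P i"
  thus "hcond P (l + i * v + b)" using hpos_facts[OF assms(1)] unfolding hpos_def by auto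
qed

lemma hcond_j: assumes "AllB P" "l \<le> j" "j < l + d"
  shows "(hcond P c \<and> l + hinv c = j) \<longleftrightarrow> c = hpos P (j - l)"
proof
  assume "hcond P c \<and> l + hinv c = j"
  thus "c = hpos P (j - l)" unfolding hcond_def by auto
next
  assume c: "c = hpos P (j - l)"
  have "j - l < d" using assms by simp
  thus "hcond P c \<and> l + hinv c = j" using hpos_facts[OF assms(1)] c assms(2) by simp
qed

lemma E_add: "E P (padd p t) = padd (E P p) (E P t)"
  unfolding E_def padd_def by (auto intro!: ext)

lemma phi_translate: "phi P z ` translate t X = translate (phi P z t) (E P ` X)"
proof -
  have "phi P z (padd p t) = padd (E P p) (phi P z t)" for p
    unfolding phi_def E_add by (simp add: padd_def add.assoc)
  thus ?thesis unfolding translate_eq by (simp add: image_image)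
qed

lemma image_fix: "(\<And>q. q \<in> X \<Longrightarrow> f q = q) \<Longrightarrow> f ` X = X"
  by (metis image_cong image_ident)

lemma E_tileG: "a < k \<Longrightarrow> E P ` tileG a T = tileG a T"
  by (rule image_fix) (auto simp: mem_tileG E_def hcond_def intro!: ext)

lemma E_tileH1: "j < l \<Longrightarrow> E P ` tileH j A = tileH j A"
  by (rule image_fix) (auto simp: mem_tileH E_def hcond_def intro!: ext)

lemma E_tileH2: assumes "AllB P" "l \<le> j" "j < l + d"
  shows "E P ` tileH j A = tileH (hpos P (j - l)) A"
proof -
  have hl: "l \<le> hpos P (j - l)" using hpos_facts[OF assms(1)] assms by simp
  have Eq: "E P q = (\<lambda>_. 0, \<lambda>c. if c = hpos P (j - l) then snd q j else 0)" if q: "q \<in> tileH j A" for q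
  proof -
    have "snd (E P q) c = (if c = hpos P (j - l) then snd q j else 0)" for c
    proof (cases "c < l")
      case True
      thus ?thesis using q hl assms(2) by (auto simp: E_def mem_tileH)
    next
      case False
      have "(if hcond P c then snd q (l + hinv c) else 0) = (if c = hpos P (j - l) then snd q j else 0)"
        using hcond_j[OF assms, of c] q unfolding mem_tileH by auto
      thus ?thesis using False by (simp add: E_def)
    qed
    moreover have "fst (E P q) = (\<lambda>_. 0)" using q by (auto simp: E_def mem_tileH)
    ultimately show ?thesis by (simp add: prod_eq_iff ext)
  qed
  show ?thesis
  proof
    show "E P ` tileH j A \<subseteq> tileH (hpos P (j - l)) A"
    proof
      fix q' assume "q' \<in> E P ` tileH j A"
      then obtain q where q: "q \<in> tileH j A" "q' = E P q" by blast
      show "q' \<in> tileH (hpos P (j - l)) A" using Eq[OF q(1)] q by (simp add: mem_tileH)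
    qed
    have "q' \<in> E P ` tileH j A" if q': "q' \<in> tileH (hpos P (j - l)) A" for q' :: "(nat \<Rightarrow> 'g) \<times> (nat \<Rightarrow> 'h)"
    proof -
      let ?q = "((\<lambda>_. 0), (\<lambda>c. if c = j then snd q' (hpos P (j - l)) else 0)) :: (nat \<Rightarrow> 'g) \<times> (nat \<Rightarrow> 'h)"
      have qin: "?q \<in> tileH j A" using q' by (simp add: mem_tileH)
      have "E P ?q = q'" using Eq[OF qin] q' by (auto simp: mem_tileH prod_eq_iff intro!: ext)
      thus ?thesis using qin by (metis image_eqI)
    qed
    thus "tileH (hpos P (j - l)) A \<subseteq> E P ` tileH j A" by blast
  qed
qed

end


context tsetup begin

lemma AllB_TV: "\<forall>i<d. \<not> isT (TV z i) \<Longrightarrow> AllB (TV z)"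
  unfolding AllB_def using TV_in by blast

lemma proj_mem_B: assumes "AllB (TV z)" "i < d"
  shows "snd z (hpos (TV z) i) - off (TV z) i \<in> B"
    "\<And>a. fst (proj i z) a = fst (snd (bs (TV z) i)) a"
    "\<And>b. b \<noteq> bet (TV z) i \<Longrightarrow> snd (proj i z) b = snd (snd (bs (TV z) i)) b"
proof -
  note sp = bs_spec[OF assms]
  have m: "proj i z \<in> translate (snd (bs (TV z) i)) (tileH (bet (TV z) i) B)"
    using TV_in[of z i] sp(2) by simp
  thus "snd z (hpos (TV z) i) - off (TV z) i \<in> B" using sp(1)
    unfolding mem_trH by (simp add: proj_def hpos_def off_def)
  show "\<And>a. fst (proj i z) a = fst (snd (bs (TV z) i)) a" using m unfolding mem_trH by simp
  show "\<And>b. b \<noteq> bet (TV z) i \<Longrightarrow> snd (proj i z) b = snd (snd (bs (TV z) i)) b" using m unfolding mem_trH by simp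
qed

lemma psi_X1: assumes "AllB (TV z)" shows "psi (TV z) z \<in> X1 k l d B"
  unfolding mem_X1 mem_space
proof (intro conjI allI impI)
  fix j assume j: "l \<le> j \<and> j < l + d"
  hence "j - l < d" by arith
  thus "snd (psi (TV z) z) j \<in> B" using proj_mem_B(1)[OF assms, of "j - l"] j by (simp add: psi_def)
qed (auto simp: psi_def)

lemma phi_psi: assumes "AllB P" shows "phi P z (psi P z) = z"
proof -
  have "snd (phi P z (psi P z)) c = snd z c" for c
  proof (cases "c < l")
    case True thus ?thesis by (simp add: phi_def padd_def E_def base_def psi_def)
  next
    case False
    show ?thesis
    proof (cases "hcond P c")
      case True
      have "hinv c < d" "hpos P (hinv c) = c" using hcond_lt[OF True] True unfolding hcond_def by auto
      thus ?thesis using True False by (simp add: phi_def padd_def E_def base_def psi_def)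
    next
      case F: False
      thus ?thesis using False by (simp add: phi_def padd_def E_def base_def psi_def)
    qed
  qed
  moreover have "fst (phi P z (psi P z)) c = fst z c" for c
    by (simp add: phi_def padd_def E_def base_def psi_def)
  ultimately show ?thesis by (simp add: prod_eq_iff ext)
qed

lemma phi_S: assumes "z \<in> S" "p \<in> space k (l + d)" shows "phi P z p \<in> S"
  using assms unfolding mem_space by (auto simp: phi_def padd_def E_def base_def hcond_def)

lemma psi_phi: assumes "AllB P" "p \<in> space k (l + d)" shows "psi P (phi P z p) = p"
proof -
  have "snd (psi P (phi P z p)) c = snd p c" for c
  proof (cases "c < l")
    case True thus ?thesis by (simp add: phi_def padd_def E_def base_def psi_def)
  next
    case False
    show ?thesis
    proof (cases "c < l + d")
      case True
      have i: "c - l < d" using True False by simp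
      note h = hpos_facts[OF assms(1) i]
      have "\<not> hpos P (c - l) < l" using h by simp
      thus ?thesis using True False h by (simp add: phi_def padd_def E_def base_def psi_def)
    next
      case F: False
      thus ?thesis using False assms(2) by (simp add: psi_def mem_space)
    qed
  qed
  moreover have "fst (psi P (phi P z p)) c = fst p c" for c
    using assms(2) by (simp add: phi_def padd_def E_def base_def psi_def mem_space)
  ultimately show ?thesis by (simp add: prod_eq_iff ext)
qed

lemma base_phi: "base P (phi P z p) = base P z"
  by (auto simp: phi_def padd_def E_def base_def intro!: ext)

lemma proj_phi: assumes "AllB (TV z)" "p \<in> X1 k l d B" "i < d"
  shows "proj i (phi (TV z) z p) \<in> TV z i"
proof -
  define P where "P = TV z"
  note sp = bs_spec[OF assms(1) assms(3), folded P_def]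
  define s where "s = snd (bs P i)"
  define b where "b = bet P i"
  have b: "b < v" using sp b_def by simp
  have P: "P i = translate s (tileH b B)" using sp s_def b_def by simp
  have pB: "snd p (l + i) \<in> B" using assms(2,3) by (simp add: mem_X1)
  have "proj i (phi P z p) \<in> translate s (tileH b B)"
    unfolding mem_trH
  proof (intro conjI allI impI)
    show "snd (proj i (phi P z p)) b - snd s b \<in> B"
      using hcond_block[OF assms(1)[folded P_def] b, of i] assms(3) hinv_block[OF b, of i] pB b
      by (simp add: proj_def phi_def padd_def E_def base_def off_def s_def b_def)
  next
    fix a show "fst (proj i (phi P z p)) a = fst s a"
      using proj_mem_B(2)[OF assms(1) assms(3), of a, folded P_def s_def]
      by (cases "a < u") (simp_all add: proj_def phi_def padd_def E_def base_def)
  next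
    fix b' assume b': "b' \<noteq> b"
    show "snd (proj i (phi P z p)) b' = snd s b'"
    proof (cases "b' < v")
      case True
      thus ?thesis
        using proj_mem_B(3)[OF assms(1) assms(3), of b', folded P_def s_def b_def] b'
          hcond_block[OF assms(1)[folded P_def] True, of i]
        by (simp add: proj_def phi_def padd_def E_def base_def b_def)
    next
      case False
      thus ?thesis using proj_mem_B(3)[OF assms(1) assms(3), of b', folded P_def s_def b_def] b' 
        by (simp add: proj_def)
    qed
  qed
  thus ?thesis using P P_def by simp
qed

end


context tsetup begin

lemma case2:
  assumes z: "z \<in> S" and nb: "\<forall>i<d. \<not> isT (TV z i)"
  shows "z \<in> tile2 (TV z) z" "tile2 (TV z) z \<subseteq> S" "tile2 (TV z) z \<in> copies (d * u + k) (d * v + l) T A"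
    "\<And>w. w \<in> tile2 (TV z) z \<Longrightarrow> TV w = TV z \<and> tile2 (TV w) w = tile2 (TV z) z"
proof -
  define P where "P = TV z"
  have AP: "AllB P" using AllB_TV[OF nb] P_def by simp
  define Q where "Q = ptile C1 (psi P z)"
  have X1sp: "X1 k l d B \<subseteq> space k (l + d)" by (auto simp: mem_X1)
  have "psi P z \<in> X1 k l d B" using psi_X1[OF AP[unfolded P_def]] P_def by simp
  hence "psi P z \<in> \<Union>C1" using C1(3) by simp
  hence QC: "Q \<in> C1" "psi P z \<in> Q" using ptile_in[OF C1(2), of "psi P z"] unfolding Q_def by simp_all
  have QX: "Q \<subseteq> X1 k l d B" using QC C1(3) by blast
  have t2: "tile2 P z = phi P z ` Q" unfolding tile2_def Q_def ..
  have tz: "tile2 (TV z) z = phi P z ` Q" using t2 unfolding P_def .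
  have "phi P z (psi P z) \<in> phi P z ` Q" using QC(2) by (rule imageI)
  thus "z \<in> tile2 (TV z) z" unfolding tz phi_psi[OF AP] .
  have "phi P z p \<in> S" if "p \<in> Q" for p using phi_S[OF z] that QX X1sp by blast
  thus sub: "tile2 (TV z) z \<subseteq> S" unfolding tz by blast
  have "Q \<in> copies k (l + d) T A" using QC C1(1) by blast
  then consider (G) a t where "a < k" "Q = translate t (tileG a T)"
    | (H) j t where "j < l + d" "Q = translate t (tileH j A)" unfolding copies_def by blast
  thus "tile2 (TV z) z \<in> copies (d * u + k) (d * v + l) T A"
  proof cases
    case G
    have "tile2 P z = translate (phi P z t) (tileG a T)"
      using t2 G phi_translate E_tileG by simp
    thus ?thesis using copyG[of a "d * u + k" T "phi P z t" "d * v + l" A] G T sub P_def by simp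
  next
    case H
    show ?thesis
    proof (cases "j < l")
      case True
      have "tile2 P z = translate (phi P z t) (tileH j A)"
        using t2 H phi_translate E_tileH1[OF True] by simp
      thus ?thesis using copyH[of j "d * v + l" A "phi P z t" "d * u + k" T] H A sub P_def True by simp
    next
      case False
      have "tile2 P z = translate (phi P z t) (tileH (hpos P (j - l)) A)"
        using t2 H phi_translate E_tileH2[OF AP _ H(1)] False by simp
      moreover have "j - l < d" using H(1) False by arith
      hence "hpos P (j - l) < d * v + l" using hpos_facts(3)[OF AP, of "j - l"] by simp
      ultimately show ?thesis using copyH[of "hpos P (j - l)" "d * v + l" A "phi P z t" "d * u + k" T] A sub P_def by simp
    qed
  qed
  fix w assume "w \<in> tile2 (TV z) z"
  then obtain p where p: "p \<in> Q" "w = phi P z p" using t2 P_def by blast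
  have pX: "p \<in> X1 k l d B" using p QX by blast
  have wS: "w \<in> S" using p(2) phi_S[OF z] pX X1sp by blast
  have "TV w i = TV z i" for i
  proof (cases "i < d")
    case True
    thus ?thesis using proj_phi[OF AP[unfolded P_def] pX True] TV_eq p(2) P_def by simp
  next
    case False
    thus ?thesis using proj_out[OF wS] proj_out[OF z] unfolding TV_def by simp
  qed
  hence TVw: "TV w = TV z" by (simp add: ext)
  have "phi P w = phi P z" using p(2) base_phi by (simp add: phi_def ext)
  moreover have "psi P w = p" using psi_phi[OF AP] pX X1sp p(2) by blast
  moreover have "ptile C1 p = Q" using ptile_eq[OF C1(2) p(1) QC(1)] .
  ultimately have "tile2 P w = tile2 P z" unfolding tile2_def Q_def by simp
  thus "TV w = TV z \<and> tile2 (TV w) w = tile2 (TV z) z" using TVw P_def by simp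
qed

definition tile where "tile z = (if \<exists>i<d. isT (TV z i) then tile1 (TV z) z else tile2 (TV z) z)"

lemma main: "tilable (d * u + k) (d * v + l) T A S"
proof (rule tilable_by_fun[where f = tile])
  fix z assume z: "z \<in> S"
  show "z \<in> tile z \<and> tile z \<subseteq> S \<and> tile z \<in> copies (d * u + k) (d * v + l) T A \<and> (\<forall>w\<in>tile z. tile w = tile z)"
  proof (cases "\<exists>i<d. isT (TV z i)")
    case True
    note c = case1[OF z True]
    have tw: "tile w = tile z" if "w \<in> tile z" for w
    proof -
      have w1: "w \<in> tile1 (TV z) z" using that True unfolding tile_def by simp
      note e = conjunct1[OF c(4)[OF w1]] conjunct2[OF c(4)[OF w1]]
      have "(\<exists>i<d. isT (TV w i)) = (\<exists>i<d. isT (TV z i))" using e(1) by simp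
      thus ?thesis using True e(2) unfolding tile_def by simp
    qed
    have tz: "tile z = tile1 (TV z) z" using True by (simp add: tile_def)
    show ?thesis using c tw unfolding tz by blast
  next
    case False
    hence nb: "\<forall>i<d. \<not> isT (TV z i)" by simp
    note c = case2[OF z nb]
    have tw: "tile w = tile z" if "w \<in> tile z" for w
    proof -
      have w1: "w \<in> tile2 (TV z) z" using that False unfolding tile_def by simp
      note e = conjunct1[OF c(4)[OF w1]] conjunct2[OF c(4)[OF w1]]
      have nw: "\<not> (\<exists>i<d. isT (TV w i))" using e(1) nb by simp
      show ?thesis unfolding tile_def if_not_P[OF nw] if_not_P[OF False] by (rule e(2))
    qed
    have tz: "tile z = tile2 (TV z) z" unfolding tile_def if_not_P[OF False] ..
    show ?thesis using c tw unfolding tz by blast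
  qed
qed

end

theorem corollary16:
  fixes T :: "'g::ab_group_add set" and A B :: "'h::ab_group_add set"
    and k l d u v :: nat
  assumes "T \<noteq> {}" and "A \<noteq> {}" and "A \<subseteq> B"
    and "tilable k (l + d) T A
           {(x, y) \<in> space k (l + d). \<forall>j. l \<le> j \<and> j < l + d \<longrightarrow> y j \<in> B}"
    and "tilable u v T B (space u v)"
  shows "tilable (d * u + k) (d * v + l) T A (space (d * u + k) (d * v + l))"
proof -
  obtain C1 where C1: "C1 \<subseteq> copies k (l+d) T A" "pairwise disjnt C1" "\<Union>C1 = X1 k l d B"
    using assms(4) unfolding tilable_def X1_def by blast
  obtain C0 where C0: "C0 \<subseteq> copies u v T B" "pairwise disjnt C0" "\<Union>C0 = space u v"
    using assms(5) unfolding tilable_def by blast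
  interpret tsetup T A B k l d u v C0 C1
    using assms(1-3) C0 C1 by unfold_locales auto
  show ?thesis by (rule main)
qed


end
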